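(* Let $\Pi$ be a program with nested expressions and $X$ a set of atoms. If $X\not\models\Pi$, then $\Pi^X$ is classically equivalent to $\bot$. If $X\models\Pi$, then $\Pi^X$ is classically equivalent to the program obtained from $\Pi^{\underline X}$ by replacing every occurrence of every atom not belonging to $X$ by $\bot$.
   Context: Fix a set of propositional atoms. Formulas are built from atoms and $\bot$ using the binary connectives $\wedge,\vee,\to$; $\top$ abbreviates $\bot\to\bot$, $\neg F$ abbreviates $F\to\bot$, and $F\leftrightarrow G$ abbreviates $(F\to G)\wedge(G\to F)$. A theory is a set of formulas. Interpretations are sets $X$ of atoms, and $X\models F$ denotes classical satisfaction (an atom $a$ is true iff $a\in X$). The reduct $F^X$ of a formula $F$ relative to a set $X$ of atoms is defined recursively: $\bot^X=\bot$; for an atom $a$, $a^X=a$ if $a\in X$ and $a^X=\bot$ otherwise; for $\otimes\in\{\wedge,\vee,\to\}$, $(F\otimes G)^X=F^X\otimes G^X$ if $X\models F\otimes G$, and $(F\otimes G)^X=\bot$ otherwise. For a theory $\Gamma$, $\Gamma^X=\{F^X:F\in\Gamma\}$. A nested expression is a formula containing no implications other than those of the form $F\to\bot$ (i.e. $\neg F$) or $\bot\to\bot$ (i.e. $\top$). A rule with nested expressions is $F\leftarrow G$ with $F,G$ nested expressions, identified with the formula $G\to F$; a program with nested expressions is a set of such rules (so it is also a theory). The reduct $\Pi^{\underline X}$ (in the sense of Lifschitz, Tang and Turner 1999) is obtained from $\Pi$ by replacing, in each rule, each maximal subformula of the form $\neg F$ by $\top$ if $X\models\neg F$ and by $\bot$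 otherwise. *)

theory Defs
  imports Main
begin

datatype 'a form = Bot | Atom 'a | And "'a form" "'a form" | Or "'a form" "'a form"
  | Imp "'a form" "'a form"

abbreviation Top :: "'a form" where "Top \<equiv> Imp Bot Bot"
abbreviation Neg :: "'a form \<Rightarrow> 'a form" where "Neg F \<equiv> Imp F Bot"

fun sat :: "'a set \<Rightarrow> 'a form \<Rightarrow> bool" where
  "sat X Bot = False"
| "sat X (Atom a) = (a \<in> X)"
| "sat X (And F G) = (sat X F \<and> sat X G)"
| "sat X (Or F G) = (sat X F \<or> sat X G)"
| "sat X (Imp F G) = (sat X F \<longrightarrow> sat X G)"

definition sat_th :: "'a set \<Rightarrow> 'a form set \<Rightarrow> bool" where
  "sat_th X \<Gamma> = (\<forall>F\<in>\<Gamma>. sat X F)"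

definition equiv_th :: "'a form set \<Rightarrow> 'a form set \<Rightarrow> bool" where
  "equiv_th \<Gamma> \<Delta> = (\<forall>Y. sat_th Y \<Gamma> = sat_th Y \<Delta>)"

fun reduct :: "'a form \<Rightarrow> 'a set \<Rightarrow> 'a form" where
  "reduct Bot X = Bot"
| "reduct (Atom a) X = (if a \<in> X then Atom a else Bot)"
| "reduct (And F G) X = (if sat X (And F G) then And (reduct F X) (reduct G X) else Bot)"
| "reduct (Or F G) X = (if sat X (Or F G) then Or (reduct F X) (reduct G X) else Bot)"
| "reduct (Imp F G) X = (if sat X (Imp F G) then Imp (reduct F X) (reduct G X) else Bot)"

definition reduct_th :: "'a form set \<Rightarrow> 'a set \<Rightarrow> 'a form set" where
  "reduct_th \<Gamma> X = (\<lambda>F. reduct F X) ` \<Gamma>"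

fun nested :: "'a form \<Rightarrow> bool" where
  "nested Bot = True"
| "nested (Atom a) = True"
| "nested (And F G) = (nested F \<and> nested G)"
| "nested (Or F G) = (nested F \<and> nested G)"
| "nested (Imp F G) = (G = Bot \<and> nested F)"

text \<open>A rule F <- G is the pair (F, G) (head, body); a program is a set of rules.\<close>
type_synonym 'a rule = "'a form \<times> 'a form"

definition nested_program :: "'a rule set \<Rightarrow> bool" where
  "nested_program \<Pi> = (\<forall>(F, G)\<in>\<Pi>. nested F \<and> nested G)"

definition rule_form :: "'a rule \<Rightarrow> 'a form" where
  "rule_form r = Imp (snd r) (fst r)"

definition prog_th :: "'a rule set \<Rightarrow> 'a form set" where
  "prog_th \<Pi> = rule_form ` \<Pi>"

text \<open>Lifschitz-Tang-Turner reduct of a nested expression: each maximal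
  subformula Neg F is replaced by Top if X |= Neg F and by Bot otherwise.\<close>
fun ltt :: "'a form \<Rightarrow> 'a set \<Rightarrow> 'a form" where
  "ltt Bot X = Bot"
| "ltt (Atom a) X = Atom a"
| "ltt (And F G) X = And (ltt F X) (ltt G X)"
| "ltt (Or F G) X = Or (ltt F X) (ltt G X)"
| "ltt (Imp F G) X = (if G = Bot then (if sat X (Neg F) then Top else Bot)
                      else Imp (ltt F X) (ltt G X))"

definition ltt_program :: "'a rule set \<Rightarrow> 'a set \<Rightarrow> 'a rule set" where
  "ltt_program \<Pi> X = (\<lambda>(F, G). (ltt F X, ltt G X)) ` \<Pi>"

fun kill :: "'a set \<Rightarrow> 'a form \<Rightarrow> 'a form" where
  "kill X Bot = Bot"
| "kill X (Atom a) = (if a \<in> X then Atom a else Bot)"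
| "kill X (And F G) = And (kill X F) (kill X G)"
| "kill X (Or F G) = Or (kill X F) (kill X G)"
| "kill X (Imp F G) = Imp (kill X F) (kill X G)"

definition kill_program :: "'a set \<Rightarrow> 'a rule set \<Rightarrow> 'a rule set" where
  "kill_program X \<Pi> = (\<lambda>(F, G). (kill X F, kill X G)) ` \<Pi>"

end

theory Submission
  imports Defs
begin

lemma kill_ltt_imp: "nested F \<Longrightarrow> sat Y (kill X (ltt F X)) \<Longrightarrow> sat X F"
  by (induction F) (auto split: if_splits)

lemma reduct_false: "\<not> sat X F \<Longrightarrow> reduct F X = Bot"
  by (cases F) auto

lemma reduct_nested: "nested F \<Longrightarrow> sat Y (reduct F X) = (sat X F \<and> sat Y (kill X (ltt F X)))"
proof (induction F)
  case (Imp F G)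
  then show ?case using reduct_false[of X F] by auto
qed (auto dest: kill_ltt_imp)

theorem proposition1:
  fixes \<Pi> :: "'a rule set" and X :: "'a set"
  assumes "nested_program \<Pi>"
  shows "(\<not> sat_th X (prog_th \<Pi>) \<longrightarrow> equiv_th (reduct_th (prog_th \<Pi>) X) {Bot})
       \<and> (sat_th X (prog_th \<Pi>) \<longrightarrow>
            equiv_th (reduct_th (prog_th \<Pi>) X) (prog_th (kill_program X (ltt_program \<Pi> X))))"
proof (intro conjI impI)
  assume "\<not> sat_th X (prog_th \<Pi>)"
  then obtain r where r: "r \<in> \<Pi>" "\<not> sat X (rule_form r)"
    unfolding sat_th_def prog_th_def by auto
  hence "reduct (rule_form r) X = Bot" by (simp add: reduct_false)
  hence "Bot \<in> reduct_th (prog_th \<Pi>) X" using r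
    unfolding reduct_th_def prog_th_def by (metis image_eqI)
  thus "equiv_th (reduct_th (prog_th \<Pi>) X) {Bot}"
    unfolding equiv_th_def sat_th_def by force
next
  assume s: "sat_th X (prog_th \<Pi>)"
  show "equiv_th (reduct_th (prog_th \<Pi>) X) (prog_th (kill_program X (ltt_program \<Pi> X)))"
    unfolding equiv_th_def
  proof
    fix Y
    have key: "sat Y (reduct (rule_form (H, B)) X) = sat Y (rule_form (kill X (ltt H X), kill X (ltt B X)))"
      if "(H, B) \<in> \<Pi>" for H B
    proof -
      have n: "nested H" "nested B" using assms that unfolding nested_program_def by auto
      have sx: "sat X (Imp B H)" using s that unfolding sat_th_def prog_th_def rule_form_def by force
      show ?thesis using sx n reduct_nested[OF n(1), of Y X] reduct_nested[OF n(2), of Y X]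
          kill_ltt_imp[OF n(2), of Y X]
        by (auto simp: rule_form_def)
    qed
    show "sat_th Y (reduct_th (prog_th \<Pi>) X) = sat_th Y (prog_th (kill_program X (ltt_program \<Pi> X)))"
      unfolding sat_th_def reduct_th_def prog_th_def kill_program_def ltt_program_def
      using key by auto
  qed
qed

end
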